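(* Let $\mu>0$ and consider the parametric multistage setting of the context. Assume that the noises $\mathbf{W}_1,\dots,\mathbf{W}_T$ are independent with finite supports and that there exists a compact set $\mathcal{P}\subset\mathbb{P}$ such that, for all $t\in\{0,\dots,T-1\}$ and all $w\in\mathrm{Supp}(\mathbf{W}_{t+1})$, $\mathrm{dom}\,L_t(x,u,w,\cdot)\subset\mathcal{P}$ for all $(x,u)\in\mathbb{X}\times\mathbb{U}$, and $\mathrm{dom}\,K(x,\cdot)\subset\mathcal{P}$ for all $x\in\mathbb{X}$. Then: 1. for all $t\in\{0,\dots,T-1\}$ and all $w\in\mathrm{Supp}(\mathbf{W}_{t+1})$, if $L_t(\cdot,\cdot,w,\cdot)\in\Gamma_{\mathcal{K}}[\mathbb{X}\times\mathbb{U},\mathbb{P}]$, then $L^\mu_t(\cdot,\cdot,w,\cdot)\in\Theta_{\mathcal{K}}[\mathbb{X}\times\mathbb{U},\mathbb{P}]$; 2. if $K\in\Gamma[\mathbb{X},\mathbb{P}]$, then $K^\mu\in\Theta[\mathbb{X},\mathbb{P}]$.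
   Context: $T\ge1$; $\mathbb{X}=\mathbb{R}^{n_x}$, $\mathbb{U}=\mathbb{R}^{n_u}$, $\mathbb{W}=\mathbb{R}^{n_w}$, $\mathbb{P}=\mathbb{R}^{n_p}$; $\mathbf{W}_1,\dots,\mathbf{W}_T$ are $\mathbb{W}$-valued random variables, $\mathrm{Supp}$ denotes the set of values taken with positive probability; $L_t:\mathbb{X}\times\mathbb{U}\times\mathbb{W}\times\mathbb{P}\to\,]-\infty,+\infty]$ ($t=0,\dots,T-1$) and $K:\mathbb{X}\times\mathbb{P}\to\,]-\infty,+\infty]$ are given cost functions; $\mathrm{dom}\,g=\{g<+\infty\}$. Parametric Moreau envelopes: $L^\mu_t(x,u,w,p)=\inf_{p'\in\mathbb{P}}\big(L_t(x,u,w,p')+\frac{1}{2\mu}\|p-p'\|_2^2\big)$ and $K^\mu(x,p)=\inf_{p'\in\mathbb{P}}\big(K(x,p')+\frac{1}{2\mu}\|p-p'\|_2^2\big)$. Function classes: for a Euclidean space $\mathbb{Y}$, $\Gamma[\mathbb{Y},\mathbb{P}]$ is the set of lower semicontinuous convex functions $\mathbb{Y}\times\mathbb{P}\to\,]-\infty,+\infty]$. For $\mathcal{Q}\subset\mathbb{P}$, $\Theta[\mathbb{Y},\mathcal{Q}]$ is the set of $\theta\in\Gamma[\mathbb{Y},\mathbb{P}]$ with $\mathrm{dom}\,\theta=Y_\theta\times\mathcal{Q}$ for some (possibly empty) $Y_\theta\subset\mathbb{Y}$ and such that $\theta(y,\cdot)$ is differentiable on $\mathrm{int}\,\mathcal{Q}$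 for each $y\in Y_\theta$. $\Gamma_{\mathcal{K}}[\mathbb{X}\times\mathbb{U},\mathbb{P}]$ is the set of $\gamma\in\Gamma[\mathbb{X}\times\mathbb{U},\mathbb{P}]$ for which some compact $\mathcal{K}_\gamma\subset\mathbb{U}$ satisfies $\mathrm{dom}\,\gamma(x,\cdot,p)\subset\mathcal{K}_\gamma$ for all $(x,p)$; $\Theta_{\mathcal{K}}[\mathbb{X}\times\mathbb{U},\mathcal{Q}]=\Theta[\mathbb{X}\times\mathbb{U},\mathcal{Q}]\cap\Gamma_{\mathcal{K}}[\mathbb{X}\times\mathbb{U},\mathbb{P}]$. *)

theory Defs
  imports "HOL-Analysis.Analysis" "HOL-Probability.Probability"
begin

definition edom :: "('a \<Rightarrow> ereal) \<Rightarrow> 'a set" where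
  "edom g = {z. g z < \<infinity>}"

definition lsc_fun :: "('a::topological_space \<Rightarrow> ereal) \<Rightarrow> bool" where
  "lsc_fun f \<longleftrightarrow> (\<forall>c::ereal. closed {z. f z \<le> c})"

definition convex_fun :: "('a::real_vector \<Rightarrow> ereal) \<Rightarrow> bool" where
  "convex_fun f \<longleftrightarrow> (\<forall>x y. \<forall>t::real. 0 \<le> t \<and> t \<le> 1 \<longrightarrow>
      f ((1 - t) *\<^sub>R x + t *\<^sub>R y) \<le> ereal (1 - t) * f x + ereal t * f y)"

definition Gamma_set :: "(('y::euclidean_space \<times> 'p::euclidean_space) \<Rightarrow> ereal) set" where
  "Gamma_set = {f. (\<forall>z. f z \<noteq> -\<infinity>) \<and> lsc_fun f \<and> convex_fun f}"

definition Theta_set :: "'p set \<Rightarrow> (('y::euclidean_space \<times> 'p::euclidean_space) \<Rightarrow> ereal) set" where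
  "Theta_set Q = {\<theta>. \<theta> \<in> Gamma_set \<and>
      (\<exists>Y\<theta>. edom \<theta> = Y\<theta> \<times> Q \<and>
         (\<forall>y\<in>Y\<theta>. \<forall>p\<in>interior Q. (\<lambda>q. real_of_ereal (\<theta> (y, q))) differentiable (at p)))}"

definition GammaK_set :: "((('x::euclidean_space \<times> 'u::euclidean_space) \<times> 'p::euclidean_space) \<Rightarrow> ereal) set" where
  "GammaK_set = {\<gamma>. \<gamma> \<in> Gamma_set \<and>
      (\<exists>K. compact K \<and> (\<forall>x p. {u. \<gamma> ((x, u), p) < \<infinity>} \<subseteq> K))}"

definition ThetaK_set :: "'p set \<Rightarrow> ((('x::euclidean_space \<times> 'u::euclidean_space) \<times> 'p::euclidean_space) \<Rightarrow> ereal) set" where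
  "ThetaK_set Q = Theta_set Q \<inter> GammaK_set"

definition moreau :: "real \<Rightarrow> ('p::euclidean_space \<Rightarrow> ereal) \<Rightarrow> 'p \<Rightarrow> ereal" where
  "moreau \<mu> f p = (INF p'. f p' + ereal ((norm (p - p'))\<^sup>2 / (2 * \<mu>)))"

definition Supp :: "'a measure \<Rightarrow> ('a \<Rightarrow> 'w) \<Rightarrow> 'w set" where
  "Supp M X = {w. measure M {\<omega> \<in> space M. X \<omega> = w} > 0}"

end

theory Submission
  imports Defs
begin

lemma lsc_open: "lsc_fun f \<longleftrightarrow> (\<forall>c. open {z. c < f z})"
proof -
  have "\<And>c. {z. c < f z} = - {z. f z \<le> c}" by auto
  then show ?thesis unfolding lsc_fun_def by (simp add: closed_def)
qed

lemma lsc_attains: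
  fixes f :: "'a::topological_space \<Rightarrow> 'b::linorder"
  assumes o: "\<And>c. open {x. c < f x}" and S: "compact S" "S \<noteq> {}"
  shows "\<exists>x\<in>S. \<forall>y\<in>S. f x \<le> f y"
proof (rule ccontr)
  assume "\<not> ?thesis"
  then have cov: "S \<subseteq> (\<Union>y\<in>S. {x. f y < f x})" by (auto simp: not_le)
  obtain D where D: "D \<subseteq> S" "finite D" "S \<subseteq> (\<Union>y\<in>D. {x. f y < f x})"
    using compactE_image[OF S(1) _ cov] o by blast
  have "D \<noteq> {}" using D S(2) by auto
  then have "Min (f ` D) \<in> f ` D" using D by simp
  then obtain y0 where y0: "y0 \<in> D" "f y0 = Min (f ` D)" by auto
  then have "y0 \<in> S" using D by auto
  then obtain y where "y \<in> D" "f y < f y0" using D(3) by auto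
  moreover have "f y0 \<le> f y" using y0 \<open>y \<in> D\<close> D(2) by simp
  ultimately show False by simp
qed

lemma lsc_plus:
  fixes f :: "'a::topological_space \<Rightarrow> ereal" and g :: "'a \<Rightarrow> real"
  assumes o: "\<And>c. open {x. c < f x}" and ninf: "\<And>x. f x \<noteq> -\<infinity>" and g: "continuous_on UNIV g"
  shows "open {x. c < f x + ereal (g x)}"
proof (cases c)
  case (real r)
  have eq: "{x. c < f x + ereal (g x)} = (\<Union>a. {x. ereal a < f x} \<inter> {x. r - a < g x})"
  proof (intro set_eqI iffI)
    fix x assume x: "x \<in> {x. c < f x + ereal (g x)}"
    show "x \<in> (\<Union>a. {x. ereal a < f x} \<inter> {x. r - a < g x})"
    proof (cases "f x")
      case (real b)
      then have "b + g x > r" using x \<open>c = ereal r\<close> by simp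
      then show ?thesis using real by (intro UN_I[of "(b + r - g x)/2"]) (auto simp: field_simps)
    next
      case PInf
      then show ?thesis by (intro UN_I[of "r - g x + 1"]) auto
    next
      case MInf then show ?thesis using ninf by simp
    qed
  next
    fix x assume "x \<in> (\<Union>a. {x. ereal a < f x} \<inter> {x. r - a < g x})"
    then obtain a where a: "ereal a < f x" "r - a < g x" by auto
    then show "x \<in> {x. c < f x + ereal (g x)}" using \<open>c = ereal r\<close>
      by (cases "f x") auto
  qed
  have "\<And>a. open {x. r - a < g x}"
    using open_Collect_less[OF continuous_on_const g] by simp
  then show ?thesis unfolding eq using o by (intro open_UN open_Int) auto
next
  case PInf then show ?thesis by simp
next
  case MInf
  then have "{x. c < f x + ereal (g x)} = UNIV" using ninf by auto
  then show ?thesis by simp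
qed


lemma norm_sq_convex:
  fixes a b :: "'a::real_inner"
  assumes "0 \<le> t" "t \<le> 1"
  shows "(norm ((1 - t) *\<^sub>R a + t *\<^sub>R b))\<^sup>2 \<le> (1 - t) * (norm a)\<^sup>2 + t * (norm b)\<^sup>2"
proof -
  let ?v = "(1 - t) *\<^sub>R a + t *\<^sub>R b"
  have e1: "?v \<bullet> ?v = (1-t)^2 * (a \<bullet> a) + 2*(1-t)*t*(a \<bullet> b) + t^2 * (b \<bullet> b)"
    by (simp add: inner_add_left inner_add_right algebra_simps inner_commute power2_eq_square)
  have e2: "(a - b) \<bullet> (a - b) = a \<bullet> a - 2*(a \<bullet> b) + b \<bullet> b"
    by (simp add: inner_diff_left inner_diff_right algebra_simps inner_commute)
  have "0 \<le> t * (1 - t) * ((a - b) \<bullet> (a - b))" using assms by simp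
  then show ?thesis unfolding power2_norm_eq_inner e1 using e2 by (simp add: algebra_simps power2_eq_square)
qed

lemma moreau_main:
  fixes F :: "('y::euclidean_space \<times> 'p::euclidean_space) \<Rightarrow> ereal" and P :: "'p set"
  assumes FG: "F \<in> Gamma_set" and P: "compact P" and dom: "\<And>y. edom (\<lambda>p. F (y, p)) \<subseteq> P"
    and mu: "\<mu> > 0"
  shows "(\<lambda>(y, p). moreau \<mu> (\<lambda>p'. F (y, p')) p) \<in> Theta_set UNIV"
proof -
  define h where "h y p q = F (y, q) + ereal ((norm (p - q))\<^sup>2 / (2 * \<mu>))" for y p q
  define G where "G y p = moreau \<mu> (\<lambda>p'. F (y, p')) p" for y p
  have Gh: "G y p = (INF q. h y p q)" for y p unfolding G_def h_def moreau_def by simp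
  have ninf: "F z \<noteq> -\<infinity>" for z using FG unfolding Gamma_set_def by (cases z) auto
  have Flsc: "open {z. c < F z}" for c using FG unfolding Gamma_set_def lsc_open by auto
  have Fcvx: "convex_fun F" using FG unfolding Gamma_set_def by auto
  have outP: "q \<notin> P \<Longrightarrow> F (y, q) = \<infinity>" for y q using dom[of y] unfolding edom_def by auto
  have hninf: "h y p q \<noteq> -\<infinity>" for y p q unfolding h_def using ninf by simp
  have Fslice: "open {q. c < F (y, q)}" for y c
  proof -
    have "open ((\<lambda>q. (y, q)) -` {z. c < F z})"
      by (rule continuous_open_vimage[OF Flsc]) (intro continuous_intros)
    then show ?thesis by (simp add: vimage_def)
  qed
  have hlsc: "open {q. c < h y p q}" for y p c
    unfolding h_def
    by (rule lsc_plus[where f="\<lambda>q. F (y, q)"]) (use mu in \<open>auto intro!: continuous_intros Fslice ninf\<close>)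
  have attain: "\<exists>q. (P \<noteq> {} \<longrightarrow> q \<in> P) \<and> (\<forall>q'. h y p q \<le> h y p q')" for y p
  proof (cases "P = {}")
    case True
    then have "h y p q = \<infinity>" for q using outP unfolding h_def by simp
    then show ?thesis using True by simp
  next
    case False
    then obtain q where q: "q \<in> P" "\<forall>q'\<in>P. h y p q \<le> h y p q'"
      using lsc_attains[OF hlsc P] by blast
    have "h y p q \<le> h y p q'" for q'
      using q outP[of q' y] by (cases "q' \<in> P") (auto simp: h_def)
    then show ?thesis using q by blast
  qed
  have Gmin: "G y p = h y p q" if "\<forall>q'. h y p q \<le> h y p q'" for y p q
    unfolding Gh using that by (intro INF_eqI) auto
  have Gle: "G y p \<le> h y p q" for y p q unfolding Gh by (rule INF_lower) simp
  have Gninf: "G y p \<noteq> -\<infinity>" for y p using attain[of y p] Gmin hninf by metis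
  have Ginf_empty: "G y p = \<infinity>" if "P = {}" for y p
  proof -
    obtain q where "\<forall>q'. h y p q \<le> h y p q'" using attain by blast
    then have "G y p = h y p q" by (rule Gmin)
    then show ?thesis using outP[of q y] that by (simp add: h_def)
  qed
  have Glsc: "open {z. c < G (fst z) (snd z)}" for c
  proof (cases "P = {}")
    case True
    then show ?thesis using Ginf_empty by (cases "c = \<infinity>") auto
  next
    case False
    define Op where "Op = {w. c < h (fst (fst w)) (snd (fst w)) (snd w)}"
    have Fo: "open {w::(('y \<times> 'p) \<times> 'p). c' < F (fst (fst w), snd w)}" for c' :: ereal
    proof -
      have "open ((\<lambda>w::(('y \<times> 'p) \<times> 'p). (fst (fst w), snd w)) -` {z. c' < F z})"
        by (rule continuous_open_vimage[OF Flsc]) (intro continuous_intros)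
      then show ?thesis by (simp add: vimage_def)
    qed
    have oOp: "open Op" unfolding Op_def h_def
      by (rule lsc_plus[where f="\<lambda>w. F (fst (fst w), snd w)"])
        (use mu in \<open>auto intro!: continuous_intros Fo ninf\<close>)
    have eq: "{z. c < G (fst z) (snd z)} = {z. \<forall>q\<in>P. (z, q) \<in> Op}"
    proof (intro set_eqI iffI)
      fix z assume "z \<in> {z. c < G (fst z) (snd z)}"
      then show "z \<in> {z. \<forall>q\<in>P. (z, q) \<in> Op}" unfolding Op_def
        using Gle[of "fst z" "snd z"] by (auto intro: less_le_trans)
    next
      fix z assume z: "z \<in> {z. \<forall>q\<in>P. (z, q) \<in> Op}"
      obtain q where q: "q \<in> P" "\<forall>q'. h (fst z) (snd z) q \<le> h (fst z) (snd z) q'"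
        using attain[of "fst z" "snd z"] False by blast
      show "z \<in> {z. c < G (fst z) (snd z)}" using z q Gmin[OF q(2)] unfolding Op_def by auto
    qed
    show ?thesis unfolding eq open_subopen[of "{z. \<forall>q\<in>P. (z, q) \<in> Op}"]
    proof
      fix z assume z: "z \<in> {z. \<forall>q\<in>P. (z, q) \<in> Op}"
      then have "{z} \<times> P \<subseteq> Op" by auto
      then obtain X0 where "z \<in> X0" "open X0" "X0 \<times> P \<subseteq> Op" using Elementary_Topology.tube_lemma[OF P oOp] by blast
      then show "\<exists>T. open T \<and> z \<in> T \<and> T \<subseteq> {z. \<forall>q\<in>P. (z, q) \<in> Op}" by blast
    qed
  qed
  have fin_min: "\<exists>q a. (\<forall>q'. h y p q \<le> h y p q') \<and> F (y, q) = ereal a \<and> G y p = ereal (a + (norm (p - q))\<^sup>2 / (2 * \<mu>))"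
    if "G y p \<noteq> \<infinity>" for y p
  proof -
    obtain q where q: "\<forall>q'. h y p q \<le> h y p q'" using attain by blast
    have Gq: "G y p = h y p q" using Gmin[OF q] .
    then have "F (y, q) \<noteq> \<infinity>" using that by (auto simp: h_def)
    then obtain a where a: "F (y, q) = ereal a" using ninf[of "(y, q)"] by (cases "F (y, q)") auto
    have "G y p = ereal (a + (norm (p - q))\<^sup>2 / (2 * \<mu>))" using Gq a by (simp add: h_def)
    then show ?thesis using q a by blast
  qed
  have Gcvx: "G ((1-t) *\<^sub>R y1 + t *\<^sub>R y2) ((1-t) *\<^sub>R p1 + t *\<^sub>R p2) \<le> ereal (1-t) * G y1 p1 + ereal t * G y2 p2"
    if t: "0 \<le> t" "t \<le> 1" for t y1 y2 p1 p2
  proof -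
    consider "t = 0" | "t = 1" | "0 < t" "t < 1" using t by fastforce
    then show ?thesis
    proof cases
      case 1 then show ?thesis by (simp add: zero_ereal_def[symmetric])
    next
      case 2 then show ?thesis by (simp add: zero_ereal_def[symmetric])
    next
      case 3
      have nm: "ereal r * G y p \<noteq> -\<infinity>" if "0 < r" for r y p
        using Gninf[of y p] that by (cases "G y p") auto
      show ?thesis
      proof (cases "G y1 p1 = \<infinity> \<or> G y2 p2 = \<infinity>")
        case True
        then have "ereal (1-t) * G y1 p1 + ereal t * G y2 p2 = \<infinity>"
          using 3 nm[of "1-t" y1 p1] nm[of t y2 p2] by auto
        then show ?thesis by (metis ereal_less_eq(1))
      next
        case False
        then obtain q1 a1 q2 a2 where m1: "F (y1, q1) = ereal a1" "G y1 p1 = ereal (a1 + (norm (p1 - q1))\<^sup>2 / (2 * \<mu>))"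
          and m2: "F (y2, q2) = ereal a2" "G y2 p2 = ereal (a2 + (norm (p2 - q2))\<^sup>2 / (2 * \<mu>))"
          using fin_min[of y1 p1] fin_min[of y2 p2] by blast
        define yt where "yt = (1-t) *\<^sub>R y1 + t *\<^sub>R y2"
        define pt where "pt = (1-t) *\<^sub>R p1 + t *\<^sub>R p2"
        define qt where "qt = (1-t) *\<^sub>R q1 + t *\<^sub>R q2"
        have "F (yt, qt) \<le> ereal (1-t) * F (y1, q1) + ereal t * F (y2, q2)"
          using Fcvx t unfolding convex_fun_def yt_def qt_def
          by (metis (no_types, lifting) scaleR_Pair add_Pair)
        then have Fle: "F (yt, qt) \<le> ereal ((1-t) * a1 + t * a2)" using m1 m2 by simp
        have "pt - qt = (1-t) *\<^sub>R (p1 - q1) + t *\<^sub>R (p2 - q2)"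
          unfolding pt_def qt_def by (simp add: algebra_simps)
        then have nle: "(norm (pt - qt))\<^sup>2 \<le> (1-t) * (norm (p1 - q1))\<^sup>2 + t * (norm (p2 - q2))\<^sup>2"
          using norm_sq_convex[OF t] by simp
        have "G yt pt \<le> F (yt, qt) + ereal ((norm (pt - qt))\<^sup>2 / (2 * \<mu>))"
          using Gle[of yt pt qt] by (simp add: h_def)
        also have "\<dots> \<le> ereal ((1-t) * a1 + t * a2) + ereal (((1-t) * (norm (p1 - q1))\<^sup>2 + t * (norm (p2 - q2))\<^sup>2) / (2 * \<mu>))"
          using Fle nle mu by (intro add_mono) (auto simp: divide_right_mono)
        also have "\<dots> = ereal (1-t) * G y1 p1 + ereal t * G y2 p2"
          unfolding m1 m2 using mu by (simp add: field_simps)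
        finally show ?thesis unfolding yt_def pt_def .
      qed
    qed
  qed
  define Gf where "Gf = (\<lambda>z. G (fst z) (snd z))"
  have feq: "(\<lambda>(y, p). moreau \<mu> (\<lambda>p'. F (y, p')) p) = Gf"
    by (auto simp: Gf_def G_def)
  have GfG: "Gf \<in> Gamma_set"
    unfolding Gamma_set_def mem_Collect_eq lsc_open
  proof (intro conjI allI)
    fix z show "Gf z \<noteq> -\<infinity>" unfolding Gf_def by (rule Gninf)
  next
    fix c show "open {z. c < Gf z}" unfolding Gf_def by (rule Glsc)
  next
    show "convex_fun Gf" unfolding convex_fun_def Gf_def
      using Gcvx by auto
  qed
  define Y where "Y = {y. \<exists>p. F (y, p) < \<infinity>}"
  have Gfin: "G y p \<noteq> \<infinity>" if yY: "y \<in> Y" for y p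
  proof -
    obtain p0 where "F (y, p0) < \<infinity>" using yY unfolding Y_def by auto
    then have "h y p p0 < \<infinity>" by (simp add: h_def)
    then show ?thesis using Gle[of y p p0] by auto
  qed
  have edomG: "edom Gf = Y \<times> UNIV"
  proof (intro set_eqI iffI)
    fix z assume "z \<in> edom Gf"
    then have "G (fst z) (snd z) \<noteq> \<infinity>" unfolding edom_def Gf_def by auto
    then obtain q a where "F (fst z, q) = ereal a" using fin_min by blast
    then have "fst z \<in> Y" unfolding Y_def mem_Collect_eq by (intro exI[of _ q]) simp
    then show "z \<in> Y \<times> (UNIV::'p set)" by (cases z) auto
  next
    fix z assume "z \<in> Y \<times> (UNIV::'p set)"
    then show "z \<in> edom Gf" using Gfin[of "fst z" "snd z"] unfolding edom_def Gf_def
      by (cases z) (auto simp: less_ereal.simps top.not_eq_extremum)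
  qed
  have diff: "(\<lambda>q. real_of_ereal (Gf (y, q))) differentiable (at p)" if y: "y \<in> Y" for y p
  proof -
    define \<phi> where "\<phi> q = real_of_ereal (G y q)" for q
    have Gphi: "G y q = ereal (\<phi> q)" for q
      using Gfin[OF y, of q] Gninf[of y q] unfolding \<phi>_def by (cases "G y q") auto
    obtain q0 a where q0: "F (y, q0) = ereal a" "G y p = ereal (a + (norm (p - q0))\<^sup>2 / (2 * \<mu>))"
      using fin_min[OF Gfin[OF y]] by blast
    define v where "v = (1 / \<mu>) *\<^sub>R (p - q0)"
    have upper: "\<phi> (p + k) \<le> \<phi> p + v \<bullet> k + (norm k)\<^sup>2 / (2 * \<mu>)" for k
    proof -
      have "ereal (\<phi> (p + k)) \<le> ereal (a + (norm (p + k - q0))\<^sup>2 / (2 * \<mu>))"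
        using Gle[of y "p + k" q0] q0 Gphi[of "p + k"] by (simp add: h_def)
      then have 1: "\<phi> (p + k) \<le> a + (norm ((p - q0) + k))\<^sup>2 / (2 * \<mu>)" by (simp add: algebra_simps)
      have 2: "\<phi> p = a + (norm (p - q0))\<^sup>2 / (2 * \<mu>)" using q0 Gphi[of p] by simp
      have 3: "(p - q0) \<bullet> k = ((norm ((p - q0) + k))\<^sup>2 - (norm (p - q0))\<^sup>2 - (norm k)\<^sup>2) / 2"
        by (rule dot_norm)
      have "v \<bullet> k = ((p - q0) \<bullet> k) / \<mu>" unfolding v_def by simp
      then show ?thesis using 1 2 3 mu by (simp add: field_simps)
    qed
    have mid: "2 * \<phi> p \<le> \<phi> (p + k) + \<phi> (p - k)" for k
    proof -
      have "G ((1 - 1/2) *\<^sub>R y + (1/2) *\<^sub>R y) ((1 - 1/2) *\<^sub>R (p + k) + (1/2) *\<^sub>R (p - k))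
            \<le> ereal (1 - 1/2) * G y (p + k) + ereal (1/2) * G y (p - k)"
        by (rule Gcvx) auto
      moreover have "(1 - 1/2) *\<^sub>R y + (1/2) *\<^sub>R y = y"
        by (simp add: scaleR_left_distrib[symmetric])
      moreover have "(1 - 1/2) *\<^sub>R (p + k) + (1/2) *\<^sub>R (p - k) = p"
        by (simp add: algebra_simps scaleR_left_distrib[symmetric])
      ultimately have "G y p \<le> ereal (1 - 1/2) * G y (p + k) + ereal (1/2) * G y (p - k)"
        by simp
      then show ?thesis unfolding Gphi by simp
    qed
    have bound: "\<bar>\<phi> x - \<phi> p - v \<bullet> (x - p)\<bar> \<le> (norm (x - p))\<^sup>2 / (2 * \<mu>)" for x
    proof -
      define k where "k = x - p"
      have x: "x = p + k" unfolding k_def by simp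
      have "\<phi> (p + (-k)) \<le> \<phi> p + v \<bullet> (-k) + (norm (-k))\<^sup>2 / (2 * \<mu>)" by (rule upper)
      then have "\<phi> (p - k) \<le> \<phi> p - v \<bullet> k + (norm k)\<^sup>2 / (2 * \<mu>)" by simp
      then show ?thesis unfolding x using upper[of k] mid[of k] by (simp add: abs_le_iff)
    qed
    have "(\<phi> has_derivative (\<lambda>k. v \<bullet> k)) (at p)"
      unfolding has_derivative_iff_norm
    proof
      show "bounded_linear (\<lambda>k. v \<bullet> k)" by (rule bounded_linear_inner_right)
      show "((\<lambda>x. norm (\<phi> x - \<phi> p - v \<bullet> (x - p)) / norm (x - p)) \<longlongrightarrow> 0) (at p)"
      proof (rule Lim_null_comparison)
        show "\<forall>\<^sub>F x in at p. norm (norm (\<phi> x - \<phi> p - v \<bullet> (x - p)) / norm (x - p)) \<le> norm (x - p) / (2 * \<mu>)"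
        proof (rule always_eventually, rule allI)
          fix x
          show "norm (norm (\<phi> x - \<phi> p - v \<bullet> (x - p)) / norm (x - p)) \<le> norm (x - p) / (2 * \<mu>)"
          proof (cases "x = p")
            case True then show ?thesis by simp
          next
            case False
            then have np: "norm (x - p) > 0" by simp
            have "norm (\<phi> x - \<phi> p - v \<bullet> (x - p)) \<le> norm (x - p) * (norm (x - p) / (2 * \<mu>))"
              using bound[of x] by (simp add: power2_eq_square)
            then show ?thesis using np by (simp add: divide_le_eq mult.commute)
          qed
        qed
        have "((\<lambda>x. norm (x - p) / (2 * \<mu>)) \<longlongrightarrow> norm (p - p) / (2 * \<mu>)) (at p)"
          using mu by (intro tendsto_intros) auto
        then show "((\<lambda>x. norm (x - p) / (2 * \<mu>)) \<longlongrightarrow> 0) (at p)" by simp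
      qed
    qed
    then have "\<phi> differentiable (at p)" unfolding differentiable_def by blast
    moreover have "(\<lambda>q. real_of_ereal (Gf (y, q))) = \<phi>" unfolding Gf_def \<phi>_def by simp
    ultimately show ?thesis by simp
  qed
  show ?thesis unfolding feq Theta_set_def
    using GfG edomG diff by auto
qed


theorem lemma1:
  fixes T :: nat and \<mu> :: real
    and M :: "'s measure"
    and W :: "nat \<Rightarrow> 's \<Rightarrow> 'w::euclidean_space"
    and L :: "nat \<Rightarrow> 'x::euclidean_space \<Rightarrow> 'u::euclidean_space \<Rightarrow> 'w \<Rightarrow> 'p::euclidean_space \<Rightarrow> ereal"
    and K :: "'x \<Rightarrow> 'p \<Rightarrow> ereal"
    and P :: "'p set"
  assumes T: "T \<ge> 1"
    and mu: "\<mu> > 0"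
    and L_ninf: "\<And>t x u w p. L t x u w p \<noteq> -\<infinity>"
    and K_ninf: "\<And>x p. K x p \<noteq> -\<infinity>"
    and M: "prob_space M"
    and indep: "prob_space.indep_vars M (\<lambda>_. borel) W {1..T}"
    and fin_supp: "\<And>t. t \<in> {1..T} \<Longrightarrow> finite (Supp M (W t))
                     \<and> measure M {\<omega> \<in> space M. W t \<omega> \<in> Supp M (W t)} = 1"
    and P: "compact P"
    and domL: "\<And>t w x u. t < T \<Longrightarrow> w \<in> Supp M (W (t + 1)) \<Longrightarrow> edom (L t x u w) \<subseteq> P"
    and domK: "\<And>x. edom (K x) \<subseteq> P"
  shows "(\<forall>t < T. \<forall>w \<in> Supp M (W (t + 1)).
            (\<lambda>((x, u), p). L t x u w p) \<in> GammaK_set \<longrightarrow>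
            (\<lambda>((x, u), p). moreau \<mu> (L t x u w) p) \<in> ThetaK_set UNIV)
       \<and> ((\<lambda>(x, p). K x p) \<in> Gamma_set \<longrightarrow>
            (\<lambda>(x, p). moreau \<mu> (K x) p) \<in> Theta_set UNIV)"
proof (intro conjI allI impI ballI)
  fix t w assume t: "t < T" and w: "w \<in> Supp M (W (t + 1))"
    and FK: "(\<lambda>((x, u), p). L t x u w p) \<in> GammaK_set"
  define F where "F = (\<lambda>((x, u), p). L t x u w p)"
  have FG: "F \<in> Gamma_set" using FK unfolding F_def GammaK_set_def by auto
  obtain Kc where Kc: "compact Kc" "\<And>x p. {u. F ((x, u), p) < \<infinity>} \<subseteq> Kc"
    using FK unfolding F_def GammaK_set_def by auto
  have dom: "edom (\<lambda>p. F (y, p)) \<subseteq> P" for y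
    using domL[OF t w, of "fst y" "snd y"] unfolding F_def by (cases y) (simp add: edom_def)
  have eq: "(\<lambda>(y, p). moreau \<mu> (\<lambda>p'. F (y, p')) p) = (\<lambda>((x, u), p). moreau \<mu> (L t x u w) p)"
    unfolding F_def by (auto simp: fun_eq_iff)
  have Th: "(\<lambda>((x, u), p). moreau \<mu> (L t x u w) p) \<in> Theta_set UNIV"
    using moreau_main[OF FG P dom mu] unfolding eq .
  have "{u. moreau \<mu> (L t x u w) p < \<infinity>} \<subseteq> Kc" for x p
  proof
    fix u assume "u \<in> {u. moreau \<mu> (L t x u w) p < \<infinity>}"
    then obtain p' where "L t x u w p' + ereal ((norm (p - p'))\<^sup>2 / (2 * \<mu>)) < \<infinity>"
      unfolding moreau_def mem_Collect_eq INF_less_iff by blast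
    then have "F ((x, u), p') < \<infinity>" unfolding F_def by auto
    then show "u \<in> Kc" using Kc(2) by blast
  qed
  then show "(\<lambda>((x, u), p). moreau \<mu> (L t x u w) p) \<in> ThetaK_set UNIV"
    using Th Kc(1) unfolding ThetaK_set_def GammaK_set_def Theta_set_def by auto
next
  assume KG: "(\<lambda>(x, p). K x p) \<in> Gamma_set"
  have dom: "edom (\<lambda>p. (\<lambda>(x, p). K x p) (y, p)) \<subseteq> P" for y using domK[of y] by simp
  have "(\<lambda>(y, p). moreau \<mu> (\<lambda>p'. (\<lambda>(x, p). K x p) (y, p')) p) \<in> Theta_set UNIV"
    by (rule moreau_main[OF KG P dom mu])
  then show "(\<lambda>(x, p). moreau \<mu> (K x) p) \<in> Theta_set UNIV" by simp
qed

end
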